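(* Let $n\in\mathbb N$ be even and let $1_n=(1,2,\ldots,n)$. Let $$a_1(n)=\{\pi\in\mathcal P_2(n)\,:\,\#(\pi^{-1}1_n)=n/2-1\}.$$ For $1\le u<v<n$ let $\mathrm{NC}^{\rm T}_{2,u,v}(n)$ be the set of pairings $\pi\in\mathcal P_2(n)$ such that, with $\gamma=1_n\,(u-1,v)$ (where the transposition $(0,v)$ is interpreted as $(n,v)$): (i) the group $\langle\pi,\gamma\rangle$ acts transitively on $[n]$; (ii) $\#(\pi)+\#(\pi^{-1}\gamma)+\#(\gamma)=n+2$; (iii) $(u,v)$ is a cycle of $\pi$; (iv) for all $a\in\{1,\ldots,u-1\}$ (an empty condition when $u=1$), $\pi(a)\in[n]\setminus\{u,u+1,\ldots,v\}$. Let $\mathrm{NC}_2^{\rm T}(n)=\bigcup_{1\le u<v<n}\mathrm{NC}^{\rm T}_{2,u,v}(n)$. Then $a_1(n)=\mathrm{NC}_2^{\rm T}(n)$ as subsets of $\mathcal P_2(n)$.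
   Context: $[n]=\{1,\ldots,n\}$. $\mathcal P_2(n)$ is the set of pairings of $[n]$, each identified with the fixed-point-free involution of $[n]$ whose cycles are its blocks. Permutations are composed right to left, $(\sigma\rho)(x)=\sigma(\rho(x))$, and $\#(\sigma)$ denotes the number of cycles of $\sigma$, fixed points included. Note $1_n(u-1,v)=(u,\ldots,v)(1,\ldots,u-1,v+1,\ldots,n)$ has two cycles. The set $a_1(n)$ encodes the genus-one orientable ribbon graphs built from one $n$-gon. *)

theory Defs
  imports "HOL-Combinatorics.Combinatorics"
begin

text \<open>Permutations of [n] = {1..n} are functions nat => nat that permute {1..n}
  (identity outside). Composition is right to left: (s o r) x = s (r x).\<close>

definition pairings :: "nat \<Rightarrow> (nat \<Rightarrow> nat) set" where
  "pairings n = {p. p permutes {1..n} \<and> (\<forall>x\<in>{1..n}. p (p x) = x \<and> p x \<noteq> x)}"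

definition ncycles :: "nat \<Rightarrow> (nat \<Rightarrow> nat) \<Rightarrow> nat" where
  "ncycles n s = card ((\<lambda>x. {(s ^^ k) x | k. True}) ` {1..n})"

definition long_cycle :: "nat \<Rightarrow> nat \<Rightarrow> nat" where
  "long_cycle n x = (if 1 \<le> x \<and> x < n then x + 1 else if x = n then 1 else x)"

definition a1 :: "nat \<Rightarrow> (nat \<Rightarrow> nat) set" where
  "a1 n = {p \<in> pairings n. int (ncycles n (inv p \<circ> long_cycle n)) = int n div 2 - 1}"

inductive_set gen_group :: "(nat \<Rightarrow> nat) \<Rightarrow> (nat \<Rightarrow> nat) \<Rightarrow> (nat \<Rightarrow> nat) set"
  for a b where
  gg_id: "id \<in> gen_group a b"
| gg_a: "a \<in> gen_group a b"
| gg_b: "b \<in> gen_group a b"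
| gg_comp: "f \<in> gen_group a b \<Longrightarrow> g \<in> gen_group a b \<Longrightarrow> f \<circ> g \<in> gen_group a b"
| gg_inv: "f \<in> gen_group a b \<Longrightarrow> inv f \<in> gen_group a b"

definition gammaT :: "nat \<Rightarrow> nat \<Rightarrow> nat \<Rightarrow> nat \<Rightarrow> nat" where
  "gammaT n u v = long_cycle n \<circ> transpose (if u = 1 then n else u - 1) v"

definition NCT_uv :: "nat \<Rightarrow> nat \<Rightarrow> nat \<Rightarrow> (nat \<Rightarrow> nat) set" where
  "NCT_uv n u v = {p \<in> pairings n.
     (\<forall>x\<in>{1..n}. \<forall>y\<in>{1..n}. \<exists>g\<in>gen_group p (gammaT n u v). g x = y) \<and>
     ncycles n p + ncycles n (inv p \<circ> gammaT n u v) + ncycles n (gammaT n u v) = n + 2 \<and>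
     p u = v \<and> p v = u \<and>
     (\<forall>a\<in>{1..<u}. p a \<in> {1..n} - {u..v})}"

definition NCT :: "nat \<Rightarrow> (nat \<Rightarrow> nat) set" where
  "NCT n = (\<Union>u\<in>{1..<n}. \<Union>v\<in>{u<..<n}. NCT_uv n u v)"

end

theory Submission
  imports Defs
begin


definition nc :: "'a set \<Rightarrow> ('a \<Rightarrow> 'a) \<Rightarrow> nat" where
  "nc A s = card ((\<lambda>x. orbit s x) ` A)"

lemma ncycles_nc: "permutation s \<Longrightarrow> ncycles n s = nc {1..n} s"
  unfolding ncycles_def nc_def by (simp add: orbit_altdef_permutation)

lemma orb_self: "permutation f \<Longrightarrow> x \<in> orbit f x"
  by (rule permutation_self_in_orbit)

lemma orb_sym: "permutation f \<Longrightarrow> y \<in> orbit f x \<Longrightarrow> x \<in> orbit f y"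
  by (meson orb_self orbit_swap)

lemma orb_eq: "permutation f \<Longrightarrow> y \<in> orbit f x \<Longrightarrow> orbit f y = orbit f x"
  by (meson orb_sym orbit_trans subsetI subset_antisym)

lemma orb_inv_set: "(\<forall>y\<in>S. f y \<in> S) \<Longrightarrow> x \<in> S \<Longrightarrow> orbit f x \<subseteq> S"
proof
  fix z assume a: "\<forall>y\<in>S. f y \<in> S" "x \<in> S" and "z \<in> orbit f x"
  from this(3) show "z \<in> S" using a by (induct rule: orbit.induct) auto
qed

lemma orb_funpow: "permutation f \<Longrightarrow> (f ^^ k) x \<in> orbit f x"
  using funpow_in_orbit orb_self by metis

lemma orb_sub_A: "f permutes A \<Longrightarrow> x \<in> A \<Longrightarrow> orbit f x \<subseteq> A"
  by (rule orb_inv_set[of A]) (auto simp: permutes_in_image)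

lemma merge_part:
  assumes Z: "Z permutes A" "finite A" and c: "c \<in> A" and d: "d \<notin> orbit Z c"
  shows "orbit Z c \<subseteq> orbit (transpose c d \<circ> Z) c"
proof -
  have pZ: "permutation Z" using Z permutes_imp_permutation by blast
  have pW: "permutation (transpose c d \<circ> Z)"
    by (meson Z c permutes_imp_permutation permutes_compose permutes_swap_id permutes_in_image
        permutation_compose permutation_swap_id)
  have "(Z ^^ k) c \<in> orbit (transpose c d \<circ> Z) c" for k
  proof (induct k)
    case 0 then show ?case using orb_self[OF pW] by (metis funpow_0)
  next
    case (Suc k)
    have "(Z ^^ Suc k) c \<in> orbit Z c" using orb_funpow[OF pZ] by blast
    then have nd: "(Z ^^ Suc k) c \<noteq> d" using d by auto
    show ?case
    proof (cases "(Z ^^ Suc k) c = c")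
      case True then show ?thesis using orb_self[OF pW] by metis
    next
      case False
      then have "(transpose c d \<circ> Z) ((Z ^^ k) c) = (Z ^^ Suc k) c" using nd by simp
      then show ?thesis using Suc orbit.step by metis
    qed
  qed
  then show ?thesis unfolding orbit_altdef_permutation[OF pZ] by blast
qed

lemma perm_t: "Z permutes A \<Longrightarrow> finite A \<Longrightarrow> a \<in> A \<Longrightarrow> b \<in> A \<Longrightarrow> transpose a b \<circ> Z permutes A"
  by (simp add: permutes_compose permutes_swap_id)

lemma merge:
  assumes Z: "Z permutes A" "finite A" and a: "a \<in> A" and b: "b \<in> A" and d: "b \<notin> orbit Z a"
  shows "nc A (transpose a b \<circ> Z) + 1 = nc A Z"
proof -
  define W where "W = transpose a b \<circ> Z"
  define U where "U = orbit Z a \<union> orbit Z b"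
  have pZ: "permutation Z" using permutes_imp_permutation[OF Z(2,1)] .
  have WA: "W permutes A" unfolding W_def by (rule perm_t[OF Z a b])
  have pW: "permutation W" using permutes_imp_permutation[OF Z(2) WA] .
  have ab: "a \<notin> orbit Z b" using d orb_sym[OF pZ] by metis
  have C1: "orbit W x = orbit Z x" if x: "x \<notin> U" for x
  proof -
    have "(W ^^ k) x = (Z ^^ k) x" for k
    proof (induct k)
      case (Suc k)
      have "(Z ^^ Suc k) x \<in> orbit Z x" using orb_funpow[OF pZ] by blast
      then have "(Z ^^ Suc k) x \<noteq> a" "(Z ^^ Suc k) x \<noteq> b"
        using x orb_sym[OF pZ] unfolding U_def by blast+
      then show ?case using Suc by (simp add: W_def)
    qed simp
    then show ?thesis unfolding orbit_altdef by simp
  qed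
  have inv: "\<forall>y\<in>U. W y \<in> U"
  proof
    fix y assume "y \<in> U"
    then have "Z y \<in> U" unfolding U_def using orbit.step orbit.base orb_self[OF pZ] by (metis Un_iff)
    moreover have "a \<in> U" "b \<in> U" unfolding U_def using orb_self[OF pZ] by (metis Un_iff)+
    ultimately show "W y \<in> U" unfolding W_def by (simp add: transpose_def)
  qed
  have Oa: "orbit Z a \<subseteq> orbit W a" unfolding W_def using merge_part[OF Z a d] .
  have Ob: "orbit Z b \<subseteq> orbit W b" unfolding W_def using merge_part[OF Z b, of a] ab
    by (simp add: transpose_commute)
  have "b \<in> orbit W a"
  proof -
    define y where "y = inv Z a"
    have Zy: "Z y = a" unfolding y_def using Z permutes_inverses(1) by metis
    have "y \<in> orbit Z a" using orb_sym[OF pZ] orbit.base[of Z y] Zy by metis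
    then have "y \<in> orbit W a" using Oa by blast
    then have "W y \<in> orbit W a" by (rule orbit.step)
    then show ?thesis using Zy W_def by simp
  qed
  then have "orbit W b = orbit W a" using orb_eq[OF pW] by blast
  then have Usub: "U \<subseteq> orbit W a" using Oa Ob U_def by blast
  have C2: "orbit W x = U" if x: "x \<in> U" for x
  proof
    show "orbit W x \<subseteq> U" using orb_inv_set[OF inv x] .
    have "x \<in> orbit W a" using Usub x by blast
    then show "U \<subseteq> orbit W x" using orb_eq[OF pW] Usub by blast
  qed
  define R where "R = orbit Z ` (A - U)"
  have aU: "a \<in> U" "b \<in> U" unfolding U_def using orb_self[OF pZ] by (metis Un_iff)+
  have e1: "orbit W ` A = insert U R"
  proof -
    have "orbit W ` A = orbit W ` (A \<inter> U) \<union> orbit W ` (A - U)" by blast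
    also have "orbit W ` (A \<inter> U) = {U}" using C2 aU a by blast
    also have "orbit W ` (A - U) = R" unfolding R_def using C1 by auto
    finally show ?thesis by simp
  qed
  have e2: "orbit Z ` A = insert (orbit Z a) (insert (orbit Z b) R)"
  proof -
    have "orbit Z ` A = orbit Z ` (A \<inter> U) \<union> orbit Z ` (A - U)" by blast
    also have "orbit Z ` (A \<inter> U) = {orbit Z a, orbit Z b}"
    proof -
      have "orbit Z x = orbit Z a \<or> orbit Z x = orbit Z b" if "x \<in> U" for x
        using that orb_eq[OF pZ] unfolding U_def by blast
      then show ?thesis using aU a b by blast
    qed
    finally show ?thesis unfolding R_def by auto
  qed
  have nR: "X \<notin> R" if "X = orbit Z a \<or> X = orbit Z b \<or> X = U" for X
  proof
    assume "X \<in> R"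
    then obtain x where x: "x \<in> A - U" "X = orbit Z x" unfolding R_def by blast
    have "x \<in> orbit Z x" using orb_self[OF pZ] by blast
    then show False using that x U_def by blast
  qed
  have ne: "orbit Z a \<noteq> orbit Z b" using d orb_self[OF pZ, of b] by auto
  have fR: "finite R" unfolding R_def using Z by simp
  have "nc A W = card R + 1" unfolding nc_def e1 using fR nR by simp
  moreover have "nc A Z = card R + 2" unfolding nc_def using e2[unfolded] fR nR ne
    by (simp add:)
  ultimately show ?thesis unfolding W_def by simp
qed


lemma sep:
  assumes Z: "Z permutes A" "finite A" and a: "a \<in> A" and b: "b \<in> A" and ab: "a \<noteq> b"
    and d: "b \<in> orbit Z a"
  shows "b \<notin> orbit (transpose a b \<circ> Z) a"
proof -
  have pZ: "permutation Z" using permutes_imp_permutation[OF Z(2,1)] .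
  define W where "W = transpose a b \<circ> Z"
  have "\<exists>m. 0 < m \<and> (Z ^^ m) a = b" using d unfolding orbit_altdef by blast
  define m where "m = (LEAST m. 0 < m \<and> (Z ^^ m) a = b)"
  have m: "0 < m" "(Z ^^ m) a = b" using LeastI_ex[OF \<open>\<exists>m. _\<close>] unfolding m_def by auto
  have mmin: "(Z ^^ j) a \<noteq> b" if "0 < j" "j < m" for j
    using not_less_Least[of j "\<lambda>m. 0 < m \<and> (Z ^^ m) a = b"] that unfolding m_def by auto
  define S where "S = {(Z ^^ k) a | k. k < m}"
  have na: "(Z ^^ j) a \<noteq> a" if "0 < j" "j < m" for j
  proof
    assume h: "(Z ^^ j) a = a"
    have "(Z ^^ (m - j)) ((Z ^^ j) a) = (Z ^^ m) a"
      proof -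
      have "(Z ^^ (m - j)) ((Z ^^ j) a) = (Z ^^ (m - j + j)) a" by (simp add: funpow_add)
      then show ?thesis using that by simp
    qed
    then have "(Z ^^ (m - j)) a = b" using h m by simp
    then show False using mmin[of "m - j"] that by simp
  qed
  have inv: "\<forall>y\<in>S. W y \<in> S"
  proof
    fix y assume "y \<in> S"
    then obtain k where k: "k < m" "y = (Z ^^ k) a" unfolding S_def by blast
    show "W y \<in> S"
    proof (cases "Suc k = m")
      case True
      then have "Z y = b" using k m by (metis comp_apply funpow.simps(2))
      then have "W y = (Z ^^ 0) a" unfolding W_def by simp
      then show ?thesis unfolding S_def using m by blast
    next
      case False
      then have "Suc k < m" using k by simp
      then have "Z y \<noteq> a" "Z y \<noteq> b" using na[of "Suc k"] mmin[of "Suc k"] k by simp_all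
      then have "W y = (Z ^^ Suc k) a" unfolding W_def using k by simp
      then show ?thesis unfolding S_def using \<open>Suc k < m\<close> by blast
    qed
  qed
  have "a \<in> S" unfolding S_def using m by (metis (mono_tags, lifting) funpow_0 mem_Collect_eq)
  then have "orbit W a \<subseteq> S" using orb_inv_set[OF inv] by blast
  moreover have "b \<notin> S"
  proof
    assume "b \<in> S"
    then obtain k where k: "k < m" "b = (Z ^^ k) a" unfolding S_def by blast
    then show False using ab mmin[of k] by (cases k) auto
  qed
  ultimately show ?thesis unfolding W_def by blast
qed

lemma split:
  assumes Z: "Z permutes A" "finite A" and a: "a \<in> A" and b: "b \<in> A" and ab: "a \<noteq> b"
    and d: "b \<in> orbit Z a"
  shows "nc A (transpose a b \<circ> Z) = nc A Z + 1"
proof -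
  have W: "transpose a b \<circ> Z permutes A" by (rule perm_t[OF Z a b])
  have "nc A (transpose a b \<circ> (transpose a b \<circ> Z)) + 1 = nc A (transpose a b \<circ> Z)"
    by (rule merge[OF W Z(2) a b sep[OF Z a b ab d]])
  then show ?thesis by (simp add: comp_assoc[symmetric])
qed

lemma nc_le:
  assumes Z: "Z permutes A" "finite A" and a: "a \<in> A" and b: "b \<in> A"
  shows "nc A (transpose a b \<circ> Z) \<le> nc A Z + 1"
proof (cases "a = b")
  case True then show ?thesis by simp
next
  case False
  show ?thesis
  proof (cases "b \<in> orbit Z a")
    case True then show ?thesis using split[OF Z a b False] by simp
  next
    case f: False then show ?thesis using merge[OF Z a b f] by simp
  qed
qed

lemma comp_transpose_right:
  assumes "bij Z" shows "Z \<circ> transpose a b = transpose (Z a) (Z b) \<circ> Z"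
proof -
  have "transpose (Z a) (Z b) \<circ> Z = Z \<circ> transpose (inv Z (Z a)) (inv Z (Z b))"
    using transpose_comp_eq[OF assms] .
  then show ?thesis using assms by (simp add: bij_is_inj)
qed

lemma nc_id: "finite A \<Longrightarrow> nc A id = card A"
proof -
  have "orbit id x = {x}" for x :: 'a using orbit_eq_singleton_iff[of id x] by simp
  then have "(\<lambda>x. orbit id x) ` A = (\<lambda>x. {x}) ` A" by simp
  then show ?thesis unfolding nc_def by (simp add: card_image)
qed


definition peel :: "('a \<Rightarrow> 'a) \<Rightarrow> 'a \<Rightarrow> 'a \<Rightarrow> 'a" where
  "peel r x z = (if z = x \<or> z = r x then z else r z)"

lemma peel_props:
  assumes r: "r permutes A" and inv: "\<forall>z. r (r z) = z" and x: "x \<in> A" "r x \<noteq> x"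
  shows "r = transpose x (r x) \<circ> peel r x"
    and "peel r x permutes A"
    and "\<forall>z. peel r x (peel r x z) = z"
    and "{z\<in>A. peel r x z \<noteq> z} = {z\<in>A. r z \<noteq> z} - {x, r x}"
    and "peel r x x = x" "peel r x (r x) = r x"
    and "\<forall>z. peel r x z \<noteq> z \<longrightarrow> peel r x z = r z"
    and "r x \<in> A"
proof -
  have rz: "r z \<noteq> x \<and> r z \<noteq> r x" if "z \<noteq> x" "z \<noteq> r x" for z
    using that inv by metis
  show "r = transpose x (r x) \<circ> peel r x"
  proof
    fix z show "r z = (transpose x (r x) \<circ> peel r x) z"
      using rz[of z] inv by (auto simp: peel_def transpose_def)
  qed
  have eq: "peel r x = transpose x (r x) \<circ> r"
  proof
    fix z show "peel r x z = (transpose x (r x) \<circ> r) z"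
      using rz[of z] inv by (auto simp: peel_def transpose_def)
  qed
  show rA: "r x \<in> A" using permutes_in_image[OF r] x by simp
  have "transpose x (r x) \<circ> r permutes A" by (rule permutes_compose[OF r permutes_swap_id[OF x(1) rA]])
  then show "peel r x permutes A" using eq by simp
  show "\<forall>z. peel r x (peel r x z) = z"
    using rz inv by (auto simp: peel_def)
  show "{z\<in>A. peel r x z \<noteq> z} = {z\<in>A. r z \<noteq> z} - {x, r x}"
    using rz inv by (auto simp: peel_def)
  show "peel r x x = x" "peel r x (r x) = r x" by (auto simp: peel_def)
  show "\<forall>z. peel r x z \<noteq> z \<longrightarrow> peel r x z = r z" by (auto simp: peel_def)
qed

lemma supp_card:
  assumes r: "r permutes A" and inv: "\<forall>z. r (r z) = z" and x: "x \<in> A" "r x \<noteq> x"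
    and "finite A"
  shows "card {z\<in>A. peel r x z \<noteq> z} + 2 = card {z\<in>A. r z \<noteq> z}"
proof -
  have s: "{x, r x} \<subseteq> {z\<in>A. r z \<noteq> z}" using peel_props(8)[OF assms(1-4)] x inv by auto
  have "card ({z\<in>A. r z \<noteq> z} - {x, r x}) = card {z\<in>A. r z \<noteq> z} - card {x, r x}"
    by (rule card_Diff_subset) (use s assms(5) in auto)
  moreover have "card {x, r x} = 2" using x by simp
  moreover have "card {x, r x} \<le> card {z\<in>A. r z \<noteq> z}"
    by (rule card_mono) (use s assms(5) in auto)
  ultimately show ?thesis using peel_props(4)[OF assms(1-4)] by simp
qed

lemma no_supp_id:
  assumes r: "r permutes A" and "finite A" and "card {z\<in>A. r z \<noteq> z} = 0"
  shows "r = id"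
proof
  fix z
  have "{z\<in>A. r z \<noteq> z} = {}" using assms by simp
  then show "r z = id z" using r by (cases "z \<in> A") (auto simp: permutes_not_in)
qed

lemma peel_le:
  assumes "finite A"
  shows "\<And>r. r permutes A \<Longrightarrow> \<forall>z. r (r z) = z \<Longrightarrow> card {z\<in>A. r z \<noteq> z} = 2 * k
    \<Longrightarrow> Z permutes A \<Longrightarrow> nc A (r \<circ> Z) \<le> nc A Z + k"
proof (induct k)
  case 0
  have "r = id" using no_supp_id[OF 0(1) assms] 0(3) by simp
  then show ?case by simp
next
  case (Suc k)
  have "{z\<in>A. r z \<noteq> z} \<noteq> {}" using Suc(4) by (intro notI) simp
  then obtain x where x: "x \<in> A" "r x \<noteq> x" by blast
  note P = peel_props[OF Suc(2,3) x]
  have c: "card {z\<in>A. peel r x z \<noteq> z} = 2 * k" using supp_card[OF Suc(2,3) x assms] Suc(4) by simp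
  have IH: "nc A (peel r x \<circ> Z) \<le> nc A Z + k" using Suc(1)[OF P(2,3) c Suc(5)] .
  have e: "r \<circ> Z = transpose x (r x) \<circ> (peel r x \<circ> Z)" using P(1) by (metis comp_assoc)
  have le: "nc A (transpose x (r x) \<circ> (peel r x \<circ> Z)) \<le> nc A (peel r x \<circ> Z) + 1"
    by (rule nc_le) (use P(2,8) Suc(5) x assms permutes_compose in auto)
  show ?case unfolding e using le IH by linarith
qed

lemma peel_fix:
  assumes "finite A"
  shows "\<And>r. r permutes A \<Longrightarrow> \<forall>z. r (r z) = z \<Longrightarrow> card {z\<in>A. r z \<noteq> z} = 2 * k
    \<Longrightarrow> nc A r + k = card A"
proof (induct k)
  case 0
  have "r = id" using no_supp_id[OF 0(1) assms] 0(3) by simp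
  then show ?case using nc_id[OF assms] by (simp add: id_def)
next
  case (Suc k)
  have "{z\<in>A. r z \<noteq> z} \<noteq> {}" using Suc(4) by (intro notI) simp
  then obtain x where x: "x \<in> A" "r x \<noteq> x" by blast
  note P = peel_props[OF Suc(2,3) x]
  have c: "card {z\<in>A. peel r x z \<noteq> z} = 2 * k" using supp_card[OF Suc(2,3) x assms] Suc(4) by simp
  have IH: "nc A (peel r x) + k = card A" using Suc(1)[OF P(2,3) c] .
  have pp: "permutation (peel r x)" using permutes_imp_permutation[OF assms P(2)] .
  have "orbit (peel r x) x = {x}" using orbit_eq_singleton_iff P(5) by metis
  then have "r x \<notin> orbit (peel r x) x" using x by simp
  then have "nc A (transpose x (r x) \<circ> peel r x) + 1 = nc A (peel r x)"
    by (rule merge[OF P(2) assms x(1) P(8)])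
  then show ?case using IH P(1) by simp
qed


lemma L_perm: assumes n: "1 \<le> n" shows "long_cycle n permutes {1..n}"
proof (rule bij_imp_permutes)
  have inj: "inj_on (long_cycle n) {1..n}"
    by (auto simp: inj_on_def long_cycle_def split: if_splits)
  have "long_cycle n ` {1..n} \<subseteq> {1..n}"
  proof
    fix y assume "y \<in> long_cycle n ` {1..n}"
    then obtain x where x: "1 \<le> x" "x \<le> n" "y = long_cycle n x" by auto
    show "y \<in> {1..n}"
    proof (cases "x < n")
      case True then show ?thesis using x by (simp add: long_cycle_def)
    next
      case False then have "x = n" using x by simp
      then show ?thesis using x by (simp add: long_cycle_def)
    qed
  qed
  then have "long_cycle n ` {1..n} = {1..n}" using endo_inj_surj[OF _ _ inj] by simp
  then show "bij_betw (long_cycle n) {1..n} {1..n}" using inj by (simp add: bij_betw_def)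
  show "long_cycle n x = x" if "x \<notin> {1..n}" for x using n that by (auto simp: long_cycle_def)
qed

lemma L_perm': "1 \<le> n \<Longrightarrow> permutation (long_cycle n)"
  using permutes_imp_permutation[OF _ L_perm] by simp

lemma L_pow: "k < n \<Longrightarrow> (long_cycle n ^^ k) 1 = k + 1"
  by (induct k) (auto simp: long_cycle_def)

lemma L_orbit: assumes "x \<in> {1..n}" and n: "1 \<le> n" shows "orbit (long_cycle n) x = {1..n}"
proof
  show "orbit (long_cycle n) x \<subseteq> {1..n}" using orb_sub_A[OF L_perm[OF n] assms(1)] .
  have 1: "{1..n} \<subseteq> orbit (long_cycle n) 1"
  proof
    fix y assume y: "y \<in> {1..n}"
    then have "y = (long_cycle n ^^ (y - 1)) 1" using L_pow[of "y - 1" n] by auto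
    then show "y \<in> orbit (long_cycle n) 1" using orb_funpow[OF L_perm'[OF n]] by metis
  qed
  then have "orbit (long_cycle n) x = orbit (long_cycle n) 1"
    using orb_eq[OF L_perm'[OF n]] assms by blast
  then show "{1..n} \<subseteq> orbit (long_cycle n) x" using 1 by simp
qed

lemma nc_L: assumes "1 \<le> n" shows "nc {1..n} (long_cycle n) = 1"
proof -
  have "(\<lambda>x. orbit (long_cycle n) x) ` {1..n} = {{1..n}}" using L_orbit assms by auto
  then show ?thesis unfolding nc_def by simp
qed

lemma pairing_props:
  assumes "p \<in> pairings n"
  shows "p permutes {1..n}" "\<forall>z. p (p z) = z" "inv p = p" "{z\<in>{1..n}. p z \<noteq> z} = {1..n}"
    "\<And>x. x \<in> {1..n} \<Longrightarrow> p x \<in> {1..n}"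
proof -
  show pp: "p permutes {1..n}" using assms by (simp add: pairings_def)
  show inv: "\<forall>z. p (p z) = z"
  proof
    fix z show "p (p z) = z"
      using assms permutes_not_in[OF pp, of z] by (cases "z \<in> {1..n}") (auto simp: pairings_def)
  qed
  have "p \<circ> p = id" using inv by auto
  then show "inv p = p" using inv_unique_comp by metis
  show "{z\<in>{1..n}. p z \<noteq> z} = {1..n}" using assms by (auto simp: pairings_def)
  show "\<And>x. x \<in> {1..n} \<Longrightarrow> p x \<in> {1..n}" using permutes_in_image[OF pp] by simp
qed

lemma nc_pairing:
  assumes "p \<in> pairings n" "even n"
  shows "nc {1..n} p = n div 2"
proof -
  have "card {z\<in>{1..n}. p z \<noteq> z} = 2 * (n div 2)" using pairing_props(4)[OF assms(1)] assms(2) by simp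
  then have "nc {1..n} p + n div 2 = card {1..n}"
    using peel_fix[OF _ pairing_props(1,2)[OF assms(1)]] by simp
  then have "nc {1..n} p + n div 2 = n" by simp
  then show ?thesis using assms(2) by presburger
qed


lemma gamma_eq:
  assumes "1 \<le> u" "u < v" "v < n"
  shows "gammaT n u v = transpose u (v + 1) \<circ> long_cycle n"
proof -
  have b: "bij (long_cycle n)" using permutes_bij[OF L_perm] assms by simp
  have "gammaT n u v = transpose (long_cycle n (if u = 1 then n else u - 1)) (long_cycle n v) \<circ> long_cycle n"
    unfolding gammaT_def by (rule comp_transpose_right[OF b])
  moreover have "long_cycle n (if u = 1 then n else u - 1) = u" using assms by (auto simp: long_cycle_def)
  moreover have "long_cycle n v = v + 1" using assms by (auto simp: long_cycle_def)
  ultimately show ?thesis by simp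
qed

lemma gamma_perm:
  assumes "1 \<le> u" "u < v" "v < n"
  shows "gammaT n u v permutes {1..n}"
  unfolding gamma_eq[OF assms] using assms
  by (intro perm_t L_perm) auto

lemma nc_gamma:
  assumes "1 \<le> u" "u < v" "v < n"
  shows "nc {1..n} (gammaT n u v) = 2"
proof -
  have "v + 1 \<in> orbit (long_cycle n) u" using L_orbit[of u n] assms by auto
  then have "nc {1..n} (transpose u (v + 1) \<circ> long_cycle n) = nc {1..n} (long_cycle n) + 1"
    using assms by (intro split L_perm) auto
  then show ?thesis unfolding gamma_eq[OF assms] using nc_L assms by simp
qed

lemma crossing:
  assumes p: "p \<in> pairings n" and ev: "even n" and abcd: "1 \<le> a" "a < b" "b < c" "c < d" "d \<le> n"
    and pa: "p a = c" and pb: "p b = d"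
  shows "nc {1..n} (p \<circ> long_cycle n) + 1 \<le> n div 2"
proof -
  note P = pairing_props[OF p]
  have pc: "p c = a" "p d = b" using P(2) pa pb by metis+
  define r where "r = (\<lambda>z. if z \<in> {a,b,c,d} then z else p z)"
  have r1: "r = p \<circ> transpose a c \<circ> transpose b d"
    using abcd pa pb pc by (auto simp: r_def transpose_def fun_eq_iff)
  have n1: "1 \<le> n" using abcd by simp
  have r2: "p = r \<circ> (transpose a c \<circ> (transpose b d \<circ> long_cycle n)) \<circ> inv (long_cycle n)"
  proof -
    have "p = r \<circ> transpose a c \<circ> transpose b d"
      using abcd pa pb pc by (auto simp: r_def transpose_def fun_eq_iff)
    moreover have "long_cycle n \<circ> inv (long_cycle n) = id"
      using bij_is_surj[OF permutes_bij[OF L_perm[OF n1]]] surj_iff by blast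
    ultimately show ?thesis by (simp add: comp_assoc)
  qed
  have rp: "r permutes {1..n}" unfolding r1 using abcd
    by (intro permutes_compose permutes_swap_id P(1)) auto
  have rr: "\<forall>z. r (r z) = z" using P(2) pa pb pc by (auto simp: r_def) (metis P(2))+
  have supp: "{z\<in>{1..n}. r z \<noteq> z} = {1..n} - {a,b,c,d}"
    using P(4) by (auto simp: r_def)
  have "card ({1..n} - {a,b,c,d}) = n - 4"
    using abcd by (subst card_Diff_subset) auto
  then have csupp: "card {z\<in>{1..n}. r z \<noteq> z} = 2 * (n div 2 - 2)"
  proof -
    have "n - 4 = 2 * (n div 2 - 2)" using ev by presburger
    then show ?thesis unfolding supp using \<open>card ({1..n} - {a,b,c,d}) = n - 4\<close> by simp
  qed
  define W where "W = transpose b d \<circ> long_cycle n"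
  have WA: "W permutes {1..n}" unfolding W_def using abcd by (intro perm_t L_perm) auto
  have pW: "permutation W" using permutes_imp_permutation[OF _ WA] by simp
  have "d \<in> orbit (long_cycle n) b" using L_orbit[of b n] abcd by auto
  then have ncW: "nc {1..n} W = 2" unfolding W_def using abcd nc_L[OF n1]
    by (subst split[OF L_perm[OF n1]]) auto
  have inv: "\<forall>y\<in>{b..d-1}. W y \<in> {b..d-1}"
  proof
    fix y assume y: "y \<in> {b..d-1}"
    then have Ly: "long_cycle n y = y + 1" using abcd by (auto simp: long_cycle_def)
    show "W y \<in> {b..d-1}"
    proof (cases "y + 1 = d")
      case True then show ?thesis unfolding W_def using Ly abcd by simp
    next
      case False then show ?thesis unfolding W_def using Ly y abcd by (auto simp: transpose_def)
    qed
  qed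
  have "c \<in> {b..d-1}" using abcd by simp
  then have "orbit W c \<subseteq> {b..d-1}" using orb_inv_set[OF inv] by blast
  then have "a \<notin> orbit W c" using abcd by auto
  then have "c \<notin> orbit W a" using orb_sym[OF pW] by blast
  then have "nc {1..n} (transpose a c \<circ> W) + 1 = nc {1..n} W"
    using abcd by (intro merge[OF WA]) auto
  then have ncY: "nc {1..n} (transpose a c \<circ> W) = 1" using ncW by simp
  have YA: "transpose a c \<circ> W permutes {1..n}" using abcd by (intro perm_t WA) auto
  have "nc {1..n} (r \<circ> (transpose a c \<circ> W)) \<le> nc {1..n} (transpose a c \<circ> W) + (n div 2 - 2)"
    by (rule peel_le[OF _ rp rr csupp YA]) simp
  moreover have "p \<circ> long_cycle n = r \<circ> (transpose a c \<circ> W)"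
  proof -
    have "inv (long_cycle n) \<circ> long_cycle n = id"
      using bij_is_inj[OF permutes_bij[OF L_perm[OF n1]]] inj_iff by blast
    note hid = this
    define X where "X = transpose a c \<circ> (transpose b d \<circ> long_cycle n)"
    have "p \<circ> long_cycle n = ((r \<circ> X) \<circ> inv (long_cycle n)) \<circ> long_cycle n"
      using r2 unfolding X_def by (simp only: comp_assoc)
    also have "\<dots> = (r \<circ> X) \<circ> (inv (long_cycle n) \<circ> long_cycle n)" by (simp only: comp_assoc)
    also have "\<dots> = r \<circ> X" using hid by simp
    finally show ?thesis unfolding W_def X_def .
  qed
  ultimately show ?thesis using ncY abcd ev by simp
qed


lemma noncross:
  assumes n1: "1 \<le> n"
  shows "\<And>r. r permutes {1..n} \<Longrightarrow> \<forall>z. r (r z) = z \<Longrightarrow> card {z\<in>{1..n}. r z \<noteq> z} = 2 * k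
    \<Longrightarrow> (\<forall>a b c d. a < b \<longrightarrow> b < c \<longrightarrow> c < d \<longrightarrow> r a = c \<longrightarrow> r b = d \<longrightarrow> False)
    \<Longrightarrow> nc {1..n} (r \<circ> long_cycle n) = k + 1"
proof (induct k)
  case 0
  have "r = id" using no_supp_id[OF 0(1)] 0(3) by simp
  then show ?case using nc_L[OF n1] by simp
next
  case (Suc k)
  note rp = Suc(2) and rr = Suc(3) and nX = Suc(5)
  have "{z\<in>{1..n}. r z \<noteq> z} \<noteq> {}"
  proof
    assume e: "{z\<in>{1..n}. r z \<noteq> z} = {}"
    have "card {z\<in>{1..n}. r z \<noteq> z} = 0" by (subst e) simp
    moreover have "(2::nat) * Suc k \<noteq> 0" by simp
    ultimately show False using Suc(4) by metis
  qed
  then obtain x where x: "r x \<noteq> x" by blast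
  have "\<exists>y. y < r y"
  proof (cases "x < r x")
    case False then have "r x < r (r x)" using x rr by simp
    then show ?thesis by blast
  qed blast
  then obtain p where pP: "p < r p" and pmin: "\<forall>y. y < r y \<longrightarrow> r p - p \<le> r y - y"
    using ex_has_least_nat[of "\<lambda>y. y < r y" _ "\<lambda>y. r y - y"] by blast
  define q where "q = r p"
  have rq: "r q = p" using rr q_def by simp
  have pA: "p \<in> {1..n}" using pP permutes_not_in[OF rp, of p] by (cases "p \<in> {1..n}") auto
  have qA: "q \<in> {1..n}" using permutes_in_image[OF rp] pA q_def by simp
  have fixr: "r y = y" if y: "p < y" "y < q" for y
  proof (rule ccontr)
    assume ne: "r y \<noteq> y"
    show False
    proof (cases "y < r y")
      case True
      show False
      proof (cases "r y < q")
        case True then show ?thesis using pmin \<open>y < r y\<close> y q_def by force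
      next
        case False
        have "r y \<noteq> q" using rq y rr by (metis less_irrefl)
        then have "q < r y" using False by simp
        then show ?thesis using nX y q_def by blast
      qed
    next
      case False
      then have lt: "r y < y" using ne by simp
      have "r (r y) = y" using rr by simp
      then have P2: "r y < r (r y)" using lt by simp
      show False
      proof (cases "p < r y")
        case True
        have "r p - p \<le> r (r y) - r y" using pmin P2 by blast
        then show ?thesis using \<open>r (r y) = y\<close> True y q_def lt by simp
      next
        case False
        have "r y \<noteq> p"
        proof
          assume "r y = p"
          then have "r (r y) = q" using q_def by simp
          then show False using \<open>r (r y) = y\<close> y by simp
        qed
        then have "r y < p" using False by simp
        moreover have "r p = q" using q_def by simp
        ultimately show ?thesis using nX[rule_format, of "r y" p y q] y \<open>r (r y) = y\<close> by blast
      qed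
    qed
  qed
  have xA: "p \<in> {1..n}" "r p \<noteq> p" using pA pP by auto
  note P = peel_props[OF rp rr xA]
  have c: "card {z\<in>{1..n}. peel r p z \<noteq> z} = 2 * k"
    using supp_card[OF rp rr xA] Suc(4) by simp
  have nX': "\<forall>a b c d. a < b \<longrightarrow> b < c \<longrightarrow> c < d \<longrightarrow> peel r p a = c \<longrightarrow> peel r p b = d \<longrightarrow> False"
  proof (intro allI impI)
    fix a b c d assume h: "a < b" "b < c" "c < d" "peel r p a = c" "peel r p b = d"
    have "r a = c" using P(7)[rule_format, of a] h by simp
    moreover have "r b = d" using P(7)[rule_format, of b] h by simp
    ultimately show False using nX[rule_format, of a b c d] h by blast
  qed
  have IH: "nc {1..n} (peel r p \<circ> long_cycle n) = k + 1" using Suc(1)[OF P(2,3) c nX'] .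
  define Z where "Z = peel r p \<circ> long_cycle n"
  have ZA: "Z permutes {1..n}" unfolding Z_def by (rule permutes_compose[OF L_perm[OF n1] P(2)])
  have pw: "(Z ^^ j) p = p + j" if "j \<le> q - p" for j
    using that
  proof (induct j)
    case (Suc j)
    have "p + j < q" using Suc(2) by simp
    then have L: "long_cycle n (p + j) = p + j + 1" using pA qA by (auto simp: long_cycle_def)
    have "peel r p (p + j + 1) = p + j + 1"
    proof (cases "p + j + 1 = q")
      case True then show ?thesis using P(6) q_def by simp
    next
      case False
      then have "r (p + j + 1) = p + j + 1" using fixr \<open>p + j < q\<close> by simp
      then show ?thesis by (simp add: peel_def)
    qed
    then show ?case using Suc L by (simp add: Z_def)
  qed simp
  have "(Z ^^ (q - p)) p = q" using pw[of "q - p"] pP q_def by simp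
  then have "q \<in> orbit Z p" using orb_funpow[OF permutes_imp_permutation[OF _ ZA]] by (metis finite_atLeastAtMost)
  then have s1: "nc {1..n} (transpose p q \<circ> Z) = nc {1..n} Z + 1"
    using pA qA pP q_def by (intro split[OF ZA]) auto
  have e: "r \<circ> long_cycle n = transpose p q \<circ> Z" unfolding Z_def q_def
    using P(1) by (metis comp_assoc)
  have s2: "nc {1..n} Z = k + 1" using IH unfolding Z_def .
  show ?case unfolding e using s1 s2 by linarith
qed


lemma gg_bij: assumes "bij a" "bij b" and "g \<in> gen_group a b" shows "bij g"
  using assms(3)
proof (induct rule: gen_group.induct)
  case (gg_comp f g) show ?case by (rule bij_comp[OF gg_comp(4) gg_comp(2)])
next
  case (gg_inv f) then show ?case by (simp add: bij_imp_bij_inv)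
qed (simp_all add: assms bij_id[unfolded id_def])

lemma gg_pres: assumes "bij a" "bij b" "a ` S = S" "b ` S = S" and "g \<in> gen_group a b"
  shows "g ` S = S"
  using assms(5)
proof (induct rule: gen_group.induct)
  case (gg_comp f g)
  have "(f \<circ> g) ` S = f ` (g ` S)" by (rule image_comp[symmetric])
  then show ?case using gg_comp by simp
next
  case (gg_inv f)
  have "bij f" using gg_inv(1) gg_bij assms by blast
  then have "inv f ` (f ` S) = S" by (simp add: bij_is_inj image_inv_f_f)
  then show ?case using gg_inv by simp
qed (simp_all add: assms)

lemma gamma_val:
  assumes "1 \<le> u" "u < v" "v < n" "1 \<le> x" "x < n" "x \<noteq> u - 1" "x \<noteq> v"
  shows "gammaT n u v x = x + 1"
  using assms unfolding gamma_eq[OF assms(1-3)] by (auto simp: long_cycle_def transpose_def)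

lemma gamma_v:
  assumes "1 \<le> u" "u < v" "v < n"
  shows "gammaT n u v v = u"
  using assms unfolding gamma_eq[OF assms(1-3)] by (auto simp: long_cycle_def transpose_def)

lemma gamma_n:
  assumes "1 \<le> u" "u < v" "v < n" "1 < u"
  shows "gammaT n u v n = 1"
  using assms unfolding gamma_eq[OF assms(1-3)] by (auto simp: long_cycle_def transpose_def)

lemma trans_crossing:
  assumes p: "p \<in> pairings n" and uv: "1 \<le> u" "u < v" "v < n"
    and tr: "\<forall>x\<in>{1..n}. \<forall>y\<in>{1..n}. \<exists>g\<in>gen_group p (gammaT n u v). g x = y"
  shows "\<exists>x\<in>{u..v}. p x \<notin> {u..v}"
proof (rule ccontr)
  assume "\<not> ?thesis"
  then have inS: "\<forall>x\<in>{u..v}. p x \<in> {u..v}" by blast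
  note P = pairing_props[OF p]
  have bp: "bij p" using permutes_bij[OF P(1)] .
  have bg: "bij (gammaT n u v)" using permutes_bij[OF gamma_perm[OF uv]] .
  have pS: "p ` {u..v} = {u..v}"
  proof
    show "p ` {u..v} \<subseteq> {u..v}" using inS by blast
    show "{u..v} \<subseteq> p ` {u..v}"
    proof
      fix x assume "x \<in> {u..v}"
      then show "x \<in> p ` {u..v}" using inS P(2) by (metis image_eqI)
    qed
  qed
  have gsub: "gammaT n u v ` {u..v} \<subseteq> {u..v}"
  proof
    fix y assume "y \<in> gammaT n u v ` {u..v}"
    then obtain x where x: "x \<in> {u..v}" "y = gammaT n u v x" by blast
    show "y \<in> {u..v}"
    proof (cases "x = v")
      case True then show ?thesis using x gamma_v[OF uv] uv by simp
    next
      case False then show ?thesis using x gamma_val[OF uv, of x] uv by auto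
    qed
  qed
  have gS: "gammaT n u v ` {u..v} = {u..v}"
    by (rule endo_inj_surj[OF _ gsub]) (use inj_on_subset[OF bij_is_inj[OF bg]] in auto)
  obtain g where g: "g \<in> gen_group p (gammaT n u v)" "g u = n" using tr uv by force
  have "g ` {u..v} = {u..v}" by (rule gg_pres[OF bp bg pS gS g(1)])
  moreover have "u \<in> {u..v}" using uv by simp
  ultimately have "g u \<in> {u..v}" by blast
  then have "n \<in> {u..v}" using g(2) by simp
  then show False using uv by simp
qed


definition conn where "conn a b x y = (\<exists>g\<in>gen_group a b. g x = y)"

lemma conn_refl: "conn a b x x"
  unfolding conn_def using gen_group.gg_id[of a b] by (metis id_apply)

lemma conn_trans: "conn a b x y \<Longrightarrow> conn a b y z \<Longrightarrow> conn a b x z"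
  unfolding conn_def using gen_group.gg_comp by (metis comp_apply)

lemma conn_sym: assumes "bij a" "bij b" "conn a b x y" shows "conn a b y x"
proof -
  obtain g where g: "g \<in> gen_group a b" "g x = y" using assms(3) unfolding conn_def by blast
  have "bij g" using gg_bij[OF assms(1,2) g(1)] .
  then have "inv g y = x" using g(2) by (metis bij_is_inj inv_f_f)
  then show ?thesis unfolding conn_def using gen_group.gg_inv[OF g(1)] by blast
qed

lemma conn_a: "conn a b x (a x)" unfolding conn_def using gen_group.gg_a by blast
lemma conn_b: "conn a b x (b x)" unfolding conn_def using gen_group.gg_b by blast

lemma conn_chain:
  assumes "\<forall>x. i \<le> x \<and> x < j \<longrightarrow> conn a b x (x + 1)"
  shows "i \<le> y \<Longrightarrow> y \<le> j \<Longrightarrow> conn a b i y"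
proof (induct y)
  case 0 then show ?case using conn_refl by simp
next
  case (Suc y)
  show ?case
  proof (cases "i = Suc y")
    case True then show ?thesis using conn_refl by simp
  next
    case False
    then have "conn a b i y" using Suc by simp
    moreover have "conn a b y (y + 1)" using assms Suc False by simp
    ultimately show ?thesis using conn_trans by simp
  qed
qed

lemma pg_eq:
  assumes p: "p \<in> pairings n" and uv: "1 \<le> u" "u < v" "v < n"
  shows "p \<circ> gammaT n u v = transpose (p u) (p (v + 1)) \<circ> (p \<circ> long_cycle n)"
proof -
  have "bij p" using permutes_bij[OF pairing_props(1)[OF p]] .
  then have "p \<circ> transpose u (v + 1) = transpose (p u) (p (v + 1)) \<circ> p" by (rule comp_transpose_right)
  then show ?thesis unfolding gamma_eq[OF uv] by (metis comp_assoc)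
qed

lemma ncycles_ii:
  assumes p: "p \<in> pairings n" and uv: "1 \<le> u" "u < v" "v < n" and ev: "even n"
  shows "ncycles n p + ncycles n (inv p \<circ> gammaT n u v) + ncycles n (gammaT n u v)
         = n div 2 + nc {1..n} (p \<circ> gammaT n u v) + 2"
proof -
  note P = pairing_props[OF p]
  have n1: "1 \<le> n" using uv by simp
  have gp: "gammaT n u v permutes {1..n}" using gamma_perm[OF uv] .
  have pp: "permutation p" using permutes_imp_permutation[OF _ P(1)] by simp
  have pg: "permutation (gammaT n u v)" using permutes_imp_permutation[OF _ gp] by simp
  have ppg: "permutation (p \<circ> gammaT n u v)" using permutes_imp_permutation[OF _ permutes_compose[OF gp P(1)]] by simp
  show ?thesis
    using ncycles_nc[OF pp] ncycles_nc[OF pg] ncycles_nc[OF ppg] P(3) nc_pairing[OF p ev] nc_gamma[OF uv]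
    by simp
qed


lemma NCT_sub:
  assumes ev: "even n" and p: "p \<in> NCT_uv n u v" and uv: "1 \<le> u" "u < v" "v < n"
  shows "p \<in> a1 n"
proof -
  have pp: "p \<in> pairings n" using p unfolding NCT_uv_def by blast
  note P = pairing_props[OF pp]
  have n1: "1 \<le> n" using uv by simp
  have tr: "\<forall>x\<in>{1..n}. \<forall>y\<in>{1..n}. \<exists>g\<in>gen_group p (gammaT n u v). g x = y"
    and ii: "ncycles n p + ncycles n (inv p \<circ> gammaT n u v) + ncycles n (gammaT n u v) = n + 2"
    and puv: "p u = v" "p v = u"
    using p unfolding NCT_uv_def by blast+
  have "n div 2 + nc {1..n} (p \<circ> gammaT n u v) + 2 = n + 2" using ii ncycles_ii[OF pp uv ev] by simp
  then have c1: "nc {1..n} (p \<circ> gammaT n u v) = n div 2" using ev by presburger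
  define \<sigma> where "\<sigma> = p \<circ> long_cycle n"
  have sp: "\<sigma> permutes {1..n}" unfolding \<sigma>_def by (rule permutes_compose[OF L_perm[OF n1] P(1)])
  have "nc {1..n} (transpose (p u) (p (v + 1)) \<circ> \<sigma>) \<le> nc {1..n} \<sigma> + 1"
    using uv P(5) by (intro nc_le[OF sp]) auto
  then have lo: "n div 2 \<le> nc {1..n} \<sigma> + 1" using c1 pg_eq[OF pp uv] \<sigma>_def by simp
  obtain x where x: "x \<in> {u..v}" "p x \<notin> {u..v}" using trans_crossing[OF pp uv tr] by blast
  have xu: "x \<noteq> u" "x \<noteq> v" using x puv uv by auto
  have pxA: "p x \<in> {1..n}" using P(5) x uv by simp
  have hi: "nc {1..n} \<sigma> + 1 \<le> n div 2"
  proof (cases "p x < u")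
    case True
    have "p (p x) = x" using P(2) by simp
    then show ?thesis unfolding \<sigma>_def using crossing[OF pp ev, of "p x" u x v] True x xu pxA uv puv by simp
  next
    case False
    then have "v < p x" using x by auto
    then show ?thesis unfolding \<sigma>_def using crossing[OF pp ev, of u x v "p x"] x xu pxA uv puv by simp
  qed
  have "nc {1..n} \<sigma> + 1 = n div 2" using lo hi by simp
  moreover have "ncycles n (inv p \<circ> long_cycle n) = nc {1..n} \<sigma>"
    unfolding P(3) \<sigma>_def using ncycles_nc permutes_imp_permutation[OF _ sp] \<sigma>_def by simp
  ultimately have "int (ncycles n (inv p \<circ> long_cycle n)) = int n div 2 - 1"
    by (simp add: zdiv_int[symmetric])
  then show ?thesis unfolding a1_def using pp by simp
qed


lemma a1_sub:
  assumes ev: "even n" and pa: "p \<in> a1 n"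
  shows "p \<in> NCT n"
proof -
  have pp: "p \<in> pairings n" and hc: "int (ncycles n (inv p \<circ> long_cycle n)) = int n div 2 - 1"
    using pa unfolding a1_def by blast+
  note P = pairing_props[OF pp]
  have n2: "2 \<le> n"
  proof (rule ccontr)
    assume "\<not> 2 \<le> n"
    then have "int n div 2 = 0" by auto
    then show False using hc by simp
  qed
  then have n1: "1 \<le> n" by simp
  define \<sigma> where "\<sigma> = p \<circ> long_cycle n"
  have sp: "\<sigma> permutes {1..n}" unfolding \<sigma>_def by (rule permutes_compose[OF L_perm[OF n1] P(1)])
  have "ncycles n (inv p \<circ> long_cycle n) = nc {1..n} \<sigma>"
    unfolding P(3) \<sigma>_def using ncycles_nc permutes_imp_permutation[OF _ sp] \<sigma>_def by simp
  then have "int (nc {1..n} \<sigma>) + 1 = int (n div 2)" using hc by (simp add: zdiv_int)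
  then have ncs: "nc {1..n} \<sigma> + 1 = n div 2" by linarith
  define Q where "Q = (\<lambda>a. \<exists>q r s. 1 \<le> a \<and> a < r \<and> r < q \<and> q < s \<and> s \<le> n \<and> p a = q \<and> p r = s)"
  have "\<exists>a. Q a"
  proof (rule ccontr)
    assume nQ: "\<not> (\<exists>a. Q a)"
    have nX: "\<forall>a b c d. a < b \<longrightarrow> b < c \<longrightarrow> c < d \<longrightarrow> p a = c \<longrightarrow> p b = d \<longrightarrow> False"
    proof (intro allI impI)
      fix a b c d assume h: "a < b" "b < c" "c < d" "p a = c" "p b = d"
      have aA: "a \<in> {1..n}"
      proof (rule ccontr)
        assume "a \<notin> {1..n}"
        then have "p a = a" using permutes_not_in[OF P(1)] by blast
        then show False using h by simp
      qed
      have "d \<in> {1..n}"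
      proof (rule ccontr)
        assume "d \<notin> {1..n}"
        then have "p d = d" using permutes_not_in[OF P(1)] by blast
        moreover have "p d = b" using h P(2) by metis
        ultimately show False using h by simp
      qed
      then have "Q a" unfolding Q_def using h aA by auto
      then show False using nQ by blast
    qed
    have "card {z\<in>{1..n}. p z \<noteq> z} = 2 * (n div 2)" using P(4) ev by simp
    then have "nc {1..n} \<sigma> = n div 2 + 1" unfolding \<sigma>_def using noncross[OF n1 P(1,2) _ nX] by simp
    then show False using ncs by simp
  qed
  define u where "u = (LEAST a. Q a)"
  have Qu: "Q u" unfolding u_def using LeastI_ex[OF \<open>\<exists>a. Q a\<close>] .
  have umin: "\<not> Q a" if "a < u" for a using not_less_Least[of a Q] that unfolding u_def by blast
  obtain v r s where uvrs: "1 \<le> u" "u < r" "r < v" "v < s" "s \<le> n" "p u = v" "p r = s"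
    using Qu unfolding Q_def by blast
  have uv: "1 \<le> u" "u < v" "v < n" using uvrs by auto
  have pvu: "p v = u" using P(2) uvrs by metis
  have bp: "bij p" using permutes_bij[OF P(1)] .
  have bg: "bij (gammaT n u v)" using permutes_bij[OF gamma_perm[OF uv]] .
  let ?c = "conn p (gammaT n u v)"
  have step: "?c x (x + 1)" if "1 \<le> x" "x < n" "x \<noteq> u - 1" "x \<noteq> v" for x
    using conn_b[of p "gammaT n u v" x] gamma_val[OF uv that] by simp
  have seg1: "?c u y" if "u \<le> y" "y \<le> v" for y
    by (rule conn_chain[OF _ that]) (use step uv in auto)
  have seg2: "?c (v + 1) y" if "v + 1 \<le> y" "y \<le> n" for y
    by (rule conn_chain[OF _ that]) (use step uv in auto)
  have seg3: "?c 1 y" if "1 \<le> y" "y \<le> u - 1" for y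
    by (rule conn_chain[OF _ that]) (use step uv in auto)
  have "?c u r" using seg1 uvrs by simp
  moreover have "?c r s" using conn_a[of p "gammaT n u v" r] uvrs by simp
  moreover have "?c s (v + 1)" using conn_sym[OF bp bg seg2[of s]] uvrs by simp
  ultimately have uv1: "?c u (v + 1)" using conn_trans by metis
  have all: "?c u y" if "y \<in> {1..n}" for y
  proof (cases "y < u")
    case True
    then have u1: "1 < u" using that by simp
    have "?c u n" using conn_trans[OF uv1 seg2[of n]] uv by simp
    moreover have "?c n 1" using conn_b[of p "gammaT n u v" n] gamma_n[OF uv u1] by simp
    moreover have "?c 1 y" using seg3[of y] that True by simp
    ultimately show ?thesis using conn_trans by metis
  next
    case False
    show ?thesis
    proof (cases "y \<le> v")
      case True then show ?thesis using seg1 False by simp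
    next
      case f2: False then show ?thesis using conn_trans[OF uv1 seg2[of y]] that by simp
    qed
  qed
  have tr: "\<forall>x\<in>{1..n}. \<forall>y\<in>{1..n}. \<exists>g\<in>gen_group p (gammaT n u v). g x = y"
  proof (intro ballI)
    fix x y assume "x \<in> {1..n}" "y \<in> {1..n}"
    then have "?c x y" using conn_trans[OF conn_sym[OF bp bg all] all] by blast
    then show "\<exists>g\<in>gen_group p (gammaT n u v). g x = y" unfolding conn_def .
  qed
  define w where "w = p (v + 1)"
  have wA: "w \<in> {1..n}" "v \<in> {1..n}" using P(5) uv w_def by auto
  have vw: "v \<noteq> w"
  proof
    assume "v = w"
    then have "p v = v + 1" using P(2) w_def by metis
    then show False using pvu uv by simp
  qed
  have "\<sigma> v = w" unfolding \<sigma>_def w_def using uv by (simp add: long_cycle_def)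
  then have "w \<in> orbit \<sigma> v" using orbit.base by metis
  then have "nc {1..n} (transpose v w \<circ> \<sigma>) = nc {1..n} \<sigma> + 1"
    using wA vw by (intro split[OF sp]) auto
  then have "nc {1..n} (p \<circ> gammaT n u v) = n div 2"
    using pg_eq[OF pp uv] uvrs ncs unfolding \<sigma>_def w_def by simp
  then have ii: "ncycles n p + ncycles n (inv p \<circ> gammaT n u v) + ncycles n (gammaT n u v) = n + 2"
    using ncycles_ii[OF pp uv ev] ev by presburger
  have iv: "\<forall>a\<in>{1..<u}. p a \<in> {1..n} - {u..v}"
  proof
    fix a assume a: "a \<in> {1..<u}"
    have "p a \<in> {1..n}" using P(5) a uv by simp
    moreover have "p a \<notin> {u..v}"
    proof
      assume b: "p a \<in> {u..v}"
      have "p a \<noteq> u"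
      proof
        assume "p a = u" then have "a = v" using P(2) uvrs by metis
        then show False using a uv by simp
      qed
      moreover have "p a \<noteq> v"
      proof
        assume "p a = v" then have "a = u" using P(2) pvu by metis
        then show False using a by simp
      qed
      ultimately have "u < p a" "p a < v" using b by auto
      then have "Q a" unfolding Q_def using a uvrs uv by auto
      then show False using umin a by simp
    qed
    ultimately show "p a \<in> {1..n} - {u..v}" by simp
  qed
  have "p \<in> NCT_uv n u v" unfolding NCT_uv_def using pp tr ii uvrs pvu iv by blast
  moreover have "u \<in> {1..<n}" "v \<in> {u<..<n}" using uv by auto
  ultimately show ?thesis unfolding NCT_def by blast
qed

theorem proposition6:
  fixes n :: nat
  assumes "even n"
  shows "a1 n = NCT n"
proof
  show "a1 n \<subseteq> NCT n" using a1_sub[OF assms] by blast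
  show "NCT n \<subseteq> a1 n"
  proof
    fix p assume "p \<in> NCT n"
    then obtain u v where "u \<in> {1..<n}" "v \<in> {u<..<n}" "p \<in> NCT_uv n u v" unfolding NCT_def by blast
    then show "p \<in> a1 n" using NCT_sub[OF assms] by auto
  qed
qed


end
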